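(* Let $P$ be a continuous poset and $(T_\varepsilon)_{\varepsilon\ge0}$ a superlinear family of Scott-continuous translations satisfying TR1, TR2 and TR3. Then (i) for a persistence module $M$ over $P$, $d_a(M,0)=0$ iff $M$ is ephemeral; (ii) for a Scott sheaf $\mathcal F$ on $P^\sigma$, $d_\sigma(\mathcal F,0)=0$ iff $\mathcal F=0$.
   Context: Let $P$ be a poset (as a category, $p\to q$ iff $p\le q$). A subset is directed if nonempty and any two elements have an upper bound in it. $x\ll y$ means: for every directed $D$ whose supremum exists with $y\le\sup D$, some $d\in D$ satisfies $x\le d$. $P$ is continuous if for each $p$ the set $\{x:x\ll p\}$ is directed with supremum $p$. $U$ is Scott-open if it is an up-set meeting every directed set whose supremum exists and lies in $U$; $P^\sigma$ is $P$ with this topology. A map $f\colon P\to P$ is Scott-continuous if order-preserving and $f(\sup D)=\sup f(D)$ for directed $D$ with existing supremum. A translation is an order-preserving $T$ with $p\le T(p)$; a family $(T_\varepsilon)_{\varepsilon\ge0}$ is superlinear if $T_\varepsilon(T_\delta(p))\le T_{\varepsilon+\delta}(p)$. TR1: each $T_\varepsilon$ is an order-isomorphism. TR2: $x\ll T_\varepsilon(x)$ for all $x$ and $\varepsilon>0$. TR3: for every $p\ll q$ there is $\varepsilon>0$ with $p\le T_\varepsilon(p)\le q$. $k$ is a commutative ring with unity; persistence modules are functors from $P$ to $k$-modules; Scott sheaves are sheaves of $k$-modules on $P^\sigma$. For a persistence module, $T^*M=M\circ T$ with natural morphism $M\to T^*M$ given by $M(p\le T(p))$; for a Scott sheaf,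 $T^*\mathcal F$ is the sheaf inverse image along $T\colon P^\sigma\to P^\sigma$, with natural morphism $\mathcal F\to T^*\mathcal F$ induced on stalks by $\mathcal F_p\to\mathcal F_{T(p)}$. Objects $A,B$ are $\varepsilon$-interleaved if there are morphisms $f\colon A\to T_\varepsilon^*B$, $g\colon B\to T_\varepsilon^*A$ with $T_\varepsilon^*(g)\circ f$ and $T_\varepsilon^*(f)\circ g$ equal to the natural morphisms $A\to T_\varepsilon^*T_\varepsilon^*A$, $B\to T_\varepsilon^*T_\varepsilon^*B$. The interleaving distance is the infimum of such $\varepsilon$ ($\infty$ if none): $d_a$ for persistence modules, $d_\sigma$ for Scott sheaves. $M$ is ephemeral if $M(p\le q)=0$ for all $p\ll q$. *)

theory Defs
  imports Complex_Main "HOL-Library.Extended_Real" "HOL-Algebra.Module"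
begin

definition directed :: "'p::order set \<Rightarrow> bool" where
  "directed D \<longleftrightarrow> D \<noteq> {} \<and> (\<forall>x\<in>D. \<forall>y\<in>D. \<exists>z\<in>D. x \<le> z \<and> y \<le> z)"

definition is_sup :: "'p::order set \<Rightarrow> 'p \<Rightarrow> bool" where
  "is_sup D s \<longleftrightarrow> (\<forall>d\<in>D. d \<le> s) \<and> (\<forall>u. (\<forall>d\<in>D. d \<le> u) \<longrightarrow> s \<le> u)"

definition way_below :: "'p::order \<Rightarrow> 'p \<Rightarrow> bool" (infix \<open>\<lless>\<close> 50) where
  "x \<lless> y \<longleftrightarrow> (\<forall>D s. directed D \<and> is_sup D s \<and> y \<le> s \<longrightarrow> (\<exists>d\<in>D. x \<le> d))"

definition continuous_poset :: "'p::order itself \<Rightarrow> bool" where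
  "continuous_poset TYPE('p) \<longleftrightarrow>
     (\<forall>p::'p. directed {x. x \<lless> p} \<and> is_sup {x. x \<lless> p} p)"

definition scott_open :: "'p::order set \<Rightarrow> bool" where
  "scott_open U \<longleftrightarrow> (\<forall>x y. x \<in> U \<and> x \<le> y \<longrightarrow> y \<in> U) \<and>
     (\<forall>D s. directed D \<and> is_sup D s \<and> s \<in> U \<longrightarrow> D \<inter> U \<noteq> {})"

definition scott_continuous :: "('p::order \<Rightarrow> 'p) \<Rightarrow> bool" where
  "scott_continuous f \<longleftrightarrow> mono f \<and>
     (\<forall>D s. directed D \<and> is_sup D s \<longrightarrow> is_sup (f ` D) (f s))"

definition translation :: "('p::order \<Rightarrow> 'p) \<Rightarrow> bool" where
  "translation T \<longleftrightarrow> mono T \<and> (\<forall>p. p \<le> T p)"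

text \<open>A family (T eps), eps >= 0; values at negative eps are irrelevant.\<close>

definition superlinear :: "(real \<Rightarrow> 'p::order \<Rightarrow> 'p) \<Rightarrow> bool" where
  "superlinear T \<longleftrightarrow> (\<forall>e d p. 0 \<le> e \<and> 0 \<le> d \<longrightarrow> T e (T d p) \<le> T (e + d) p)"

definition order_iso :: "('p::order \<Rightarrow> 'p) \<Rightarrow> bool" where
  "order_iso f \<longleftrightarrow> bij f \<and> (\<forall>x y. x \<le> y \<longleftrightarrow> f x \<le> f y)"

definition TR1 :: "(real \<Rightarrow> 'p::order \<Rightarrow> 'p) \<Rightarrow> bool" where
  "TR1 T \<longleftrightarrow> (\<forall>e\<ge>0. order_iso (T e))"

definition TR2 :: "(real \<Rightarrow> 'p::order \<Rightarrow> 'p) \<Rightarrow> bool" where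
  "TR2 T \<longleftrightarrow> (\<forall>x e. e > 0 \<longrightarrow> x \<lless> T e x)"

definition TR3 :: "(real \<Rightarrow> 'p::order \<Rightarrow> 'p) \<Rightarrow> bool" where
  "TR3 T \<longleftrightarrow> (\<forall>p q. p \<lless> q \<longrightarrow> (\<exists>e>0. p \<le> T e p \<and> T e p \<le> q))"

definition mod_hom :: "('r, 'x) ring_scheme \<Rightarrow> ('r, 'm) module \<Rightarrow> ('r, 'n) module
    \<Rightarrow> ('m \<Rightarrow> 'n) \<Rightarrow> bool" where
  "mod_hom R M N f \<longleftrightarrow> f \<in> carrier M \<rightarrow> carrier N \<and>
     (\<forall>x\<in>carrier M. \<forall>y\<in>carrier M. f (x \<oplus>\<^bsub>M\<^esub> y) = f x \<oplus>\<^bsub>N\<^esub> f y) \<and>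
     (\<forall>a\<in>carrier R. \<forall>x\<in>carrier M. f (a \<odot>\<^bsub>M\<^esub> x) = a \<odot>\<^bsub>N\<^esub> f x)"

definition zero_module :: "('r, unit) module" where
  "zero_module = \<lparr>carrier = {()}, mult = (\<lambda>_ _. ()), one = (), zero = (),
                  add = (\<lambda>_ _. ()), smult = (\<lambda>_ _. ())\<rparr>"

definition pers_module :: "('r, 'x) ring_scheme \<Rightarrow> ('p::order \<Rightarrow> ('r, 'm) module)
    \<Rightarrow> ('p \<Rightarrow> 'p \<Rightarrow> 'm \<Rightarrow> 'm) \<Rightarrow> bool" where
  "pers_module R Mo Mm \<longleftrightarrow>
     (\<forall>p. module R (Mo p)) \<and>
     (\<forall>p q. p \<le> q \<longrightarrow> mod_hom R (Mo p) (Mo q) (Mm p q)) \<and>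
     (\<forall>p. \<forall>x\<in>carrier (Mo p). Mm p p x = x) \<and>
     (\<forall>p q r. p \<le> q \<and> q \<le> r \<longrightarrow> (\<forall>x\<in>carrier (Mo p). Mm q r (Mm p q x) = Mm p r x))"

text \<open>A morphism A -> T^* B, i.e. a natural family A p -> B (T p).\<close>
definition pm_mor_to_pullback :: "('r, 'x) ring_scheme \<Rightarrow> ('p::order \<Rightarrow> 'p)
    \<Rightarrow> ('p \<Rightarrow> ('r, 'm) module) \<Rightarrow> ('p \<Rightarrow> 'p \<Rightarrow> 'm \<Rightarrow> 'm)
    \<Rightarrow> ('p \<Rightarrow> ('r, 'n) module) \<Rightarrow> ('p \<Rightarrow> 'p \<Rightarrow> 'n \<Rightarrow> 'n)
    \<Rightarrow> ('p \<Rightarrow> 'm \<Rightarrow> 'n) \<Rightarrow> bool" where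
  "pm_mor_to_pullback R T Ao Am Bo Bm f \<longleftrightarrow>
     (\<forall>p. mod_hom R (Ao p) (Bo (T p)) (f p)) \<and>
     (\<forall>p q. p \<le> q \<longrightarrow> (\<forall>x\<in>carrier (Ao p). f q (Am p q x) = Bm (T p) (T q) (f p x)))"

definition pm_interleaved :: "('r, 'x) ring_scheme \<Rightarrow> ('p::order \<Rightarrow> 'p)
    \<Rightarrow> ('p \<Rightarrow> ('r, 'm) module) \<Rightarrow> ('p \<Rightarrow> 'p \<Rightarrow> 'm \<Rightarrow> 'm)
    \<Rightarrow> ('p \<Rightarrow> ('r, 'n) module) \<Rightarrow> ('p \<Rightarrow> 'p \<Rightarrow> 'n \<Rightarrow> 'n) \<Rightarrow> bool" where
  "pm_interleaved R T Ao Am Bo Bm \<longleftrightarrow>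
     (\<exists>f g. pm_mor_to_pullback R T Ao Am Bo Bm f \<and> pm_mor_to_pullback R T Bo Bm Ao Am g \<and>
        (\<forall>p. \<forall>x\<in>carrier (Ao p). g (T p) (f p x) = Am p (T (T p)) x) \<and>
        (\<forall>p. \<forall>y\<in>carrier (Bo p). f (T p) (g p y) = Bm p (T (T p)) y))"

definition pm_dist :: "('r, 'x) ring_scheme \<Rightarrow> (real \<Rightarrow> 'p::order \<Rightarrow> 'p)
    \<Rightarrow> ('p \<Rightarrow> ('r, 'm) module) \<Rightarrow> ('p \<Rightarrow> 'p \<Rightarrow> 'm \<Rightarrow> 'm)
    \<Rightarrow> ('p \<Rightarrow> ('r, 'n) module) \<Rightarrow> ('p \<Rightarrow> 'p \<Rightarrow> 'n \<Rightarrow> 'n) \<Rightarrow> ereal" where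
  "pm_dist R T Ao Am Bo Bm =
     Inf {ereal e | e. 0 \<le> e \<and> pm_interleaved R (T e) Ao Am Bo Bm}"

definition ephemeral :: "('p::order \<Rightarrow> ('r, 'm) module) \<Rightarrow> ('p \<Rightarrow> 'p \<Rightarrow> 'm \<Rightarrow> 'm) \<Rightarrow> bool" where
  "ephemeral Mo Mm \<longleftrightarrow> (\<forall>p q. p \<lless> q \<longrightarrow> (\<forall>x\<in>carrier (Mo p). Mm p q x = \<zero>\<^bsub>Mo q\<^esub>))"

definition scott_sheaf :: "('r, 'x) ring_scheme \<Rightarrow> ('p::order set \<Rightarrow> ('r, 'm) module)
    \<Rightarrow> ('p set \<Rightarrow> 'p set \<Rightarrow> 'm \<Rightarrow> 'm) \<Rightarrow> bool" where
  "scott_sheaf R Fo Fr \<longleftrightarrow>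
     (\<forall>U. scott_open U \<longrightarrow> module R (Fo U)) \<and>
     (\<forall>U V. scott_open U \<and> scott_open V \<and> V \<subseteq> U \<longrightarrow> mod_hom R (Fo U) (Fo V) (Fr U V)) \<and>
     (\<forall>U. scott_open U \<longrightarrow> (\<forall>s\<in>carrier (Fo U). Fr U U s = s)) \<and>
     (\<forall>U V W. scott_open U \<and> scott_open V \<and> scott_open W \<and> W \<subseteq> V \<and> V \<subseteq> U \<longrightarrow>
        (\<forall>s\<in>carrier (Fo U). Fr V W (Fr U V s) = Fr U W s)) \<and>
     \<comment> \<open>locality\<close>
     (\<forall>U \<U>. scott_open U \<and> (\<forall>V\<in>\<U>. scott_open V) \<and> \<Union>\<U> = U \<longrightarrow>
        (\<forall>s\<in>carrier (Fo U). \<forall>t\<in>carrier (Fo U). (\<forall>V\<in>\<U>. Fr U V s = Fr U V t) \<longrightarrow> s = t)) \<and>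
     \<comment> \<open>gluing\<close>
     (\<forall>U \<U> s. scott_open U \<and> (\<forall>V\<in>\<U>. scott_open V) \<and> \<Union>\<U> = U \<and>
        (\<forall>V\<in>\<U>. s V \<in> carrier (Fo V)) \<and>
        (\<forall>V\<in>\<U>. \<forall>W\<in>\<U>. Fr V (V \<inter> W) (s V) = Fr W (V \<inter> W) (s W)) \<longrightarrow>
        (\<exists>t\<in>carrier (Fo U). \<forall>V\<in>\<U>. Fr U V t = s V))"

text \<open>Since every T eps is an order automorphism (TR1), it is a homeomorphism of the
  Scott topology, and the inverse image sheaf is (T^* F)(U) = F(T ` U), with restriction
  maps those of F; the natural morphism F -> T^* F is restriction F(U) -> F(T ` U)
  (note T ` U \<subseteq> U for U an up-set).  A morphism A -> T^* B is thus a family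
  f U : A(U) -> B(T ` U) natural in U.\<close>

definition sh_mor_to_pullback :: "('r, 'x) ring_scheme \<Rightarrow> ('p::order \<Rightarrow> 'p)
    \<Rightarrow> ('p set \<Rightarrow> ('r, 'm) module) \<Rightarrow> ('p set \<Rightarrow> 'p set \<Rightarrow> 'm \<Rightarrow> 'm)
    \<Rightarrow> ('p set \<Rightarrow> ('r, 'n) module) \<Rightarrow> ('p set \<Rightarrow> 'p set \<Rightarrow> 'n \<Rightarrow> 'n)
    \<Rightarrow> ('p set \<Rightarrow> 'm \<Rightarrow> 'n) \<Rightarrow> bool" where
  "sh_mor_to_pullback R T Ao Ar Bo Br f \<longleftrightarrow>
     (\<forall>U. scott_open U \<longrightarrow> mod_hom R (Ao U) (Bo (T ` U)) (f U)) \<and>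
     (\<forall>U V. scott_open U \<and> scott_open V \<and> V \<subseteq> U \<longrightarrow>
        (\<forall>s\<in>carrier (Ao U). f V (Ar U V s) = Br (T ` U) (T ` V) (f U s)))"

definition sh_interleaved :: "('r, 'x) ring_scheme \<Rightarrow> ('p::order \<Rightarrow> 'p)
    \<Rightarrow> ('p set \<Rightarrow> ('r, 'm) module) \<Rightarrow> ('p set \<Rightarrow> 'p set \<Rightarrow> 'm \<Rightarrow> 'm)
    \<Rightarrow> ('p set \<Rightarrow> ('r, 'n) module) \<Rightarrow> ('p set \<Rightarrow> 'p set \<Rightarrow> 'n \<Rightarrow> 'n) \<Rightarrow> bool" where
  "sh_interleaved R T Ao Ar Bo Br \<longleftrightarrow>
     (\<exists>f g. sh_mor_to_pullback R T Ao Ar Bo Br f \<and> sh_mor_to_pullback R T Bo Br Ao Ar g \<and>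
        (\<forall>U. scott_open U \<longrightarrow>
           (\<forall>s\<in>carrier (Ao U). g (T ` U) (f U s) = Ar U (T ` T ` U) s)) \<and>
        (\<forall>U. scott_open U \<longrightarrow>
           (\<forall>s\<in>carrier (Bo U). f (T ` U) (g U s) = Br U (T ` T ` U) s)))"

definition sh_dist :: "('r, 'x) ring_scheme \<Rightarrow> (real \<Rightarrow> 'p::order \<Rightarrow> 'p)
    \<Rightarrow> ('p set \<Rightarrow> ('r, 'm) module) \<Rightarrow> ('p set \<Rightarrow> 'p set \<Rightarrow> 'm \<Rightarrow> 'm)
    \<Rightarrow> ('p set \<Rightarrow> ('r, 'n) module) \<Rightarrow> ('p set \<Rightarrow> 'p set \<Rightarrow> 'n \<Rightarrow> 'n) \<Rightarrow> ereal" where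
  "sh_dist R T Ao Ar Bo Br =
     Inf {ereal e | e. 0 \<le> e \<and> sh_interleaved R (T e) Ao Ar Bo Br}"

text \<open>The zero sheaf is zero_module on every open, with identity restrictions.\<close>

end

theory Submission imports Defs begin

lemma grp_idem_zero:
  assumes "abelian_group N" "a \<in> carrier N" "a = a \<oplus>\<^bsub>N\<^esub> a"
  shows "a = \<zero>\<^bsub>N\<^esub>"
proof -
  interpret N: abelian_group N by fact
  show ?thesis using assms(2,3) N.add.l_cancel_one' by metis
qed

lemma hom_zero:
  assumes M: "module R M" and N: "module R N" and h: "mod_hom R M N f"
  shows "f \<zero>\<^bsub>M\<^esub> = \<zero>\<^bsub>N\<^esub>"
proof -
  interpret M: module R M by fact
  interpret N: module R N by fact
  have z: "\<zero>\<^bsub>M\<^esub> \<in> carrier M" by simp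
  have c: "f \<zero>\<^bsub>M\<^esub> \<in> carrier N" using h z unfolding mod_hom_def by blast
  have "f \<zero>\<^bsub>M\<^esub> = f (\<zero>\<^bsub>M\<^esub> \<oplus>\<^bsub>M\<^esub> \<zero>\<^bsub>M\<^esub>)" by simp
  also have "\<dots> = f \<zero>\<^bsub>M\<^esub> \<oplus>\<^bsub>N\<^esub> f \<zero>\<^bsub>M\<^esub>" using h z unfolding mod_hom_def by blast
  finally show ?thesis using grp_idem_zero[OF N.abelian_group_axioms c] by blast
qed

lemma hom_from_zero:
  assumes "mod_hom R zero_module N g"
  shows "g x \<in> carrier N" "g x = g x \<oplus>\<^bsub>N\<^esub> g x"
proof -
  have "() \<in> carrier zero_module" by (simp add: zero_module_def)
  then show "g x \<in> carrier N" using assms unfolding mod_hom_def by auto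
  have "g (() \<oplus>\<^bsub>zero_module\<^esub> ()) = g () \<oplus>\<^bsub>N\<^esub> g ()"
    using assms unfolding mod_hom_def by (auto simp: zero_module_def)
  then show "g x = g x \<oplus>\<^bsub>N\<^esub> g x" by simp
qed

lemma way_below_mono: "x \<lless> y \<Longrightarrow> y \<le> z \<Longrightarrow> x \<lless> z"
  unfolding way_below_def by (meson order_trans)

lemma T_mono_e:
  assumes tr: "\<forall>e\<ge>0. translation (T e) \<and> scott_continuous (T e)" and sl: "superlinear T"
    and "0 \<le> e" "e \<le> e'"
  shows "T e p \<le> T e' p"
proof -
  have "T e p \<le> T (e' - e) (T e p)" using tr assms(3,4) unfolding translation_def by auto
  also have "\<dots> \<le> T (e' - e + e) p" using sl assms(3,4) unfolding superlinear_def by (metis diff_ge_0_iff_ge)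
  finally show ?thesis by simp
qed

lemma T_twice:
  assumes tr: "\<forall>e\<ge>0. translation (T e) \<and> scott_continuous (T e)" and sl: "superlinear T"
    and "0 \<le> e" "2 * e \<le> ep"
  shows "T e (T e p) \<le> T ep p"
proof -
  have "T e (T e p) \<le> T (e + e) p" using sl assms(3) unfolding superlinear_def by blast
  also have "\<dots> \<le> T ep p" using T_mono_e[OF tr sl, of "e+e" ep] assms by auto
  finally show ?thesis .
qed

lemma T_le:
  assumes tr: "\<forall>e\<ge>0. translation (T e) \<and> scott_continuous (T e)" and "0 \<le> e"
  shows "p \<le> T e p" "p \<le> T e (T e p)"
  using tr assms(2) unfolding translation_def by (auto intro: order_trans)

lemma inf_zero_iff:
  "Inf {ereal e | e. 0 \<le> e \<and> P e} = 0 \<longleftrightarrow> (\<forall>d>0. \<exists>e. 0 \<le> e \<and> e < d \<and> P e)"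
proof
  assume h: "Inf {ereal e | e. 0 \<le> e \<and> P e} = 0"
  show "\<forall>d>0. \<exists>e. 0 \<le> e \<and> e < d \<and> P e"
  proof (intro allI impI)
    fix d :: real assume "d > 0"
    then have "Inf {ereal e | e. 0 \<le> e \<and> P e} < ereal d" using h by simp
    then obtain x where "x \<in> {ereal e | e. 0 \<le> e \<and> P e}" "x < ereal d"
      unfolding Inf_less_iff by blast
    then show "\<exists>e. 0 \<le> e \<and> e < d \<and> P e" by auto
  qed
next
  assume h: "\<forall>d>0. \<exists>e. 0 \<le> e \<and> e < d \<and> P e"
  have "0 \<le> Inf {ereal e | e. 0 \<le> e \<and> P e}" by (rule Inf_greatest) auto
  moreover have "Inf {ereal e | e. 0 \<le> e \<and> P e} \<le> 0"
  proof (rule ereal_le_epsilon2)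
    fix d :: real assume "0 < d"
    then obtain e where "0 \<le> e" "e < d" "P e" using h by blast
    then have "Inf {ereal e | e. 0 \<le> e \<and> P e} \<le> ereal e" by (intro Inf_lower) auto
    then show "Inf {ereal e | e. 0 \<le> e \<and> P e} \<le> 0 + ereal d" using \<open>e < d\<close> by (simp add: order_trans)
  qed
  ultimately show "Inf {ereal e | e. 0 \<le> e \<and> P e} = 0" by simp
qed

lemma iso_scott_open:
  assumes iso: "order_iso f" and U: "scott_open U"
  shows "scott_open (f ` U)"
proof -
  have bij: "bij f" and le: "\<And>x y. x \<le> y \<longleftrightarrow> f x \<le> f y" using iso unfolding order_iso_def by auto
  have up: "\<And>x y. x \<in> U \<Longrightarrow> x \<le> y \<Longrightarrow> y \<in> U" using U unfolding scott_open_def by blast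
  have dirU: "\<And>D s. directed D \<Longrightarrow> is_sup D s \<Longrightarrow> s \<in> U \<Longrightarrow> D \<inter> U \<noteq> {}"
    using U unfolding scott_open_def by blast
  show ?thesis unfolding scott_open_def
  proof (intro conjI allI impI)
    fix x y assume "x \<in> f ` U \<and> x \<le> y"
    then obtain u where u: "u \<in> U" "x = f u" "x \<le> y" by blast
    obtain z where z: "y = f z" using bij by (metis bij_pointE)
    then have "u \<le> z" using u le by auto
    then show "y \<in> f ` U" using up u z by blast
  next
    fix D s assume a: "directed D \<and> is_sup D s \<and> s \<in> f ` U"
    then obtain u where u: "u \<in> U" "s = f u" by blast
    define D' where "D' = {z. f z \<in> D}"
    have fD: "f ` D' = D" unfolding D'_def using bij by (auto simp: bij_def surj_def)
    have "directed D'" unfolding directed_def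
    proof (intro conjI ballI)
      show "D' \<noteq> {}" using fD a unfolding directed_def by auto
    next
      fix x y assume "x \<in> D'" "y \<in> D'"
      then obtain w where "w \<in> D" "f x \<le> w" "f y \<le> w" using a unfolding directed_def D'_def by blast
      then show "\<exists>z\<in>D'. x \<le> z \<and> y \<le> z" using fD le by blast
    qed
    moreover have "is_sup D' u" unfolding is_sup_def
    proof (intro conjI allI impI ballI)
      fix d assume "d \<in> D'"
      then show "d \<le> u" using a u le unfolding is_sup_def D'_def by auto
    next
      fix v assume "\<forall>d\<in>D'. d \<le> v"
      then have "\<forall>d\<in>D. d \<le> f v" using fD le by auto
      then show "u \<le> v" using a u le unfolding is_sup_def by auto
    qed
    ultimately have "D' \<inter> U \<noteq> {}" using dirU u by blast
    then show "D \<inter> f ` U \<noteq> {}" unfolding D'_def by blast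
  qed
qed


lemma pmD:
  assumes "pers_module R Mo Mm"
  shows "module R (Mo p)" "p \<le> q \<Longrightarrow> mod_hom R (Mo p) (Mo q) (Mm p q)"
    "p \<le> q \<Longrightarrow> q \<le> r \<Longrightarrow> x \<in> carrier (Mo p) \<Longrightarrow> Mm q r (Mm p q x) = Mm p r x"
  using assms unfolding pers_module_def by simp_all

lemma pm_inter_char:
  fixes Mo :: "'p::order \<Rightarrow> ('r,'m) module" and T :: "real \<Rightarrow> 'p \<Rightarrow> 'p"
  assumes pm: "pers_module R Mo Mm" and tr: "\<forall>e\<ge>0. translation (T e) \<and> scott_continuous (T e)"
    and e: "0 \<le> e"
  shows "pm_interleaved R (T e) Mo Mm (\<lambda>_. zero_module) (\<lambda>_ _ y. y) \<longleftrightarrow>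
     (\<forall>p. \<forall>x\<in>carrier (Mo p). Mm p (T e (T e p)) x = \<zero>\<^bsub>Mo (T e (T e p))\<^esub>)"
proof
  assume "pm_interleaved R (T e) Mo Mm (\<lambda>_. zero_module) (\<lambda>_ _ y. y)"
  then obtain f g where g: "pm_mor_to_pullback R (T e) (\<lambda>_. zero_module) (\<lambda>_ _ y. y) Mo Mm g"
    and c: "\<forall>p. \<forall>x\<in>carrier (Mo p). g (T e p) (f p x) = Mm p (T e (T e p)) x"
    unfolding pm_interleaved_def by blast
  show "\<forall>p. \<forall>x\<in>carrier (Mo p). Mm p (T e (T e p)) x = \<zero>\<^bsub>Mo (T e (T e p))\<^esub>"
  proof (intro allI ballI)
    fix p x assume x: "x \<in> carrier (Mo p)"
    have h: "mod_hom R zero_module (Mo (T e (T e p))) (g (T e p))"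
      using g unfolding pm_mor_to_pullback_def by blast
    have ab: "abelian_group (Mo (T e (T e p)))" using spec[OF conjunct1[OF pm[unfolded pers_module_def]]] by (rule module.axioms(2))
    show "Mm p (T e (T e p)) x = \<zero>\<^bsub>Mo (T e (T e p))\<^esub>"
      using c x grp_idem_zero[OF ab hom_from_zero[OF h]] by metis
  qed
next
  assume h: "\<forall>p. \<forall>x\<in>carrier (Mo p). Mm p (T e (T e p)) x = \<zero>\<^bsub>Mo (T e (T e p))\<^esub>"
  have mono: "mono (T e)" using tr e unfolding translation_def by blast
  note mods = pmD(1)[OF pm] and homs = pmD(2)[OF pm]
  define g where "g = (\<lambda>(p::'p) (y::unit). \<zero>\<^bsub>Mo (T e p)\<^esub>)"
  have "pm_mor_to_pullback R (T e) Mo Mm (\<lambda>_. zero_module) (\<lambda>_ _ y. y) (\<lambda>p x. ())"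
    unfolding pm_mor_to_pullback_def mod_hom_def by (auto simp: zero_module_def)
  moreover have "pm_mor_to_pullback R (T e) (\<lambda>_. zero_module) (\<lambda>_ _ y. y) Mo Mm g"
    unfolding pm_mor_to_pullback_def
  proof (intro conjI allI impI ballI)
    fix p :: 'p
    interpret M: module R "Mo (T e p)" by (rule mods)
    show "mod_hom R zero_module (Mo (T e p)) (g p)"
      unfolding mod_hom_def g_def by (auto simp: zero_module_def)
  next
    fix p q :: 'p and x assume "p \<le> q"
    then have "T e p \<le> T e q" using mono by (auto dest: monoD)
    then show "g q x = Mm (T e p) (T e q) (g p x)"
      unfolding g_def using hom_zero[OF mods mods homs] by metis
  qed
  moreover have "\<forall>p. \<forall>x\<in>carrier (Mo p). g (T e p) ((\<lambda>p x. ()) p x) = Mm p (T e (T e p)) x"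
    using h unfolding g_def by auto
  moreover have "\<forall>p. \<forall>y\<in>carrier zero_module. (\<lambda>p x. ()) (T e p) (g p y) = y" by simp
  ultimately show "pm_interleaved R (T e) Mo Mm (\<lambda>_. zero_module) (\<lambda>_ _ y. y)"
    unfolding pm_interleaved_def by (intro exI[of _ "\<lambda>p x. ()"] exI[of _ g]) auto
qed

lemma part1:
  assumes pm: "pers_module R Mo Mm" and tr: "\<forall>e\<ge>0. translation (T e) \<and> scott_continuous (T e)"
    and sl: "superlinear T" and t2: "TR2 T" and t3: "TR3 T"
  shows "pm_dist R T Mo Mm (\<lambda>_. zero_module) (\<lambda>_ _ y. y) = 0 \<longleftrightarrow> ephemeral Mo Mm"
proof -
  note mods = pmD(1)[OF pm] and homs = pmD(2)[OF pm] and comp = pmD(3)[OF pm]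
  let ?P = "\<lambda>e. \<forall>p. \<forall>x\<in>carrier (Mo p). Mm p (T e (T e p)) x = \<zero>\<^bsub>Mo (T e (T e p))\<^esub>"
  have "pm_dist R T Mo Mm (\<lambda>_. zero_module) (\<lambda>_ _ y. y) = Inf {ereal e | e. 0 \<le> e \<and> ?P e}"
    unfolding pm_dist_def apply (rule arg_cong[where f=Inf], rule Collect_cong, rule ex_cong1)
    using pm_inter_char[OF pm tr] by blast
  then have eq: "pm_dist R T Mo Mm (\<lambda>_. zero_module) (\<lambda>_ _ y. y) = 0 \<longleftrightarrow>
      (\<forall>d>0. \<exists>e. 0 \<le> e \<and> e < d \<and> ?P e)" by (simp only: inf_zero_iff)
  show ?thesis unfolding eq
  proof
    assume h: "\<forall>d>0. \<exists>e. 0 \<le> e \<and> e < d \<and> ?P e"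
    show "ephemeral Mo Mm" unfolding ephemeral_def
    proof (intro allI impI ballI)
      fix p q x assume pq: "p \<lless> q" and x: "x \<in> carrier (Mo p)"
      obtain ep where ep: "ep > 0" "T ep p \<le> q" using t3 pq unfolding TR3_def by blast
      obtain e where e: "0 \<le> e" "e < ep / 2" "?P e" using h ep by (metis half_gt_zero)
      let ?r = "T e (T e p)"
      have rq: "?r \<le> q" using T_twice[OF tr sl e(1), of ep p] ep e by auto
      have pr: "p \<le> ?r" using T_le[OF tr e(1)] by blast
      have "Mm p q x = Mm ?r q (Mm p ?r x)" using comp[OF pr rq x] by simp
      also have "\<dots> = Mm ?r q \<zero>\<^bsub>Mo ?r\<^esub>" using e(3) x by simp
      also have "\<dots> = \<zero>\<^bsub>Mo q\<^esub>" using hom_zero[OF mods mods homs[OF rq]] .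
      finally show "Mm p q x = \<zero>\<^bsub>Mo q\<^esub>" .
    qed
  next
    assume eph: "ephemeral Mo Mm"
    show "\<forall>d>0. \<exists>e. 0 \<le> e \<and> e < d \<and> ?P e"
    proof (intro allI impI)
      fix d :: real assume d: "d > 0"
      have "?P (d/2)"
      proof (intro allI ballI)
        fix p x assume "x \<in> carrier (Mo p)"
        moreover have "p \<lless> T (d/2) p" using t2 d unfolding TR2_def by simp
        moreover have "T (d/2) p \<le> T (d/2) (T (d/2) p)" using T_le[OF tr, of "d/2"] d by simp
        ultimately show "Mm p (T (d/2) (T (d/2) p)) x = \<zero>\<^bsub>Mo (T (d/2) (T (d/2) p))\<^esub>"
          using eph way_below_mono unfolding ephemeral_def by blast
      qed
      then show "\<exists>e. 0 \<le> e \<and> e < d \<and> ?P e" using d by (intro exI[of _ "d/2"]) auto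
    qed
  qed
qed


lemma shD:
  assumes "scott_sheaf R Fo Fr"
  shows "scott_open U \<Longrightarrow> module R (Fo U)"
    "scott_open U \<Longrightarrow> scott_open V \<Longrightarrow> V \<subseteq> U \<Longrightarrow> mod_hom R (Fo U) (Fo V) (Fr U V)"
    "scott_open U \<Longrightarrow> (\<forall>V\<in>\<U>. scott_open V) \<Longrightarrow> \<Union>\<U> = U \<Longrightarrow> s \<in> carrier (Fo U)
       \<Longrightarrow> t \<in> carrier (Fo U) \<Longrightarrow> (\<forall>V\<in>\<U>. Fr U V s = Fr U V t) \<Longrightarrow> s = t"
proof -
  have a: "\<forall>U. scott_open U \<longrightarrow> module R (Fo U)"
    and b: "\<forall>U V. scott_open U \<and> scott_open V \<and> V \<subseteq> U \<longrightarrow> mod_hom R (Fo U) (Fo V) (Fr U V)"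
    and c: "\<forall>U \<U>. scott_open U \<and> (\<forall>V\<in>\<U>. scott_open V) \<and> \<Union>\<U> = U \<longrightarrow>
        (\<forall>s\<in>carrier (Fo U). \<forall>t\<in>carrier (Fo U). (\<forall>V\<in>\<U>. Fr U V s = Fr U V t) \<longrightarrow> s = t)"
    using assms unfolding scott_sheaf_def
    apply -
    apply (erule conjE, assumption)
    apply (erule conjE, erule conjE, assumption)
    apply (erule conjE)+ apply assumption
    done
  show "scott_open U \<Longrightarrow> module R (Fo U)" using a by blast
  show "scott_open U \<Longrightarrow> scott_open V \<Longrightarrow> V \<subseteq> U \<Longrightarrow> mod_hom R (Fo U) (Fo V) (Fr U V)" using b by blast
  show "scott_open U \<Longrightarrow> (\<forall>V\<in>\<U>. scott_open V) \<Longrightarrow> \<Union>\<U> = U \<Longrightarrow> s \<in> carrier (Fo U)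
       \<Longrightarrow> t \<in> carrier (Fo U) \<Longrightarrow> (\<forall>V\<in>\<U>. Fr U V s = Fr U V t) \<Longrightarrow> s = t"
    using c by blast
qed

lemma open_img:
  assumes t1: "TR1 T" and e: "0 \<le> e" and U: "scott_open U"
  shows "scott_open (T e ` U)"
  using iso_scott_open[OF _ U] t1 e unfolding TR1_def by blast

lemma img_sub:
  assumes tr: "\<forall>e\<ge>0. translation (T e) \<and> scott_continuous (T e)" and e: "0 \<le> e" and U: "scott_open U"
  shows "T e ` U \<subseteq> U"
proof
  fix y assume "y \<in> T e ` U"
  then obtain u where u: "u \<in> U" "y = T e u" by blast
  have "u \<le> T e u" using tr e unfolding translation_def by blast
  then show "y \<in> U" using U u unfolding scott_open_def by blast
qed

lemma part2:
  fixes Fo :: "'p::order set \<Rightarrow> ('r,'n) module" and T :: "real \<Rightarrow> 'p \<Rightarrow> 'p"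
  assumes sh: "scott_sheaf R Fo Fr" and tr: "\<forall>e\<ge>0. translation (T e) \<and> scott_continuous (T e)"
    and sl: "superlinear T" and t1: "TR1 T" and t3: "TR3 T" and cp: "continuous_poset TYPE('p)"
  shows "sh_dist R T Fo Fr (\<lambda>_. zero_module) (\<lambda>_ _ y. y) = 0 \<longleftrightarrow>
         (\<forall>U. scott_open U \<longrightarrow> carrier (Fo U) = {\<zero>\<^bsub>Fo U\<^esub>})"
proof -
  note mods = shD(1)[OF sh] and homs = shD(2)[OF sh] and loc = shD(3)[OF sh]
  let ?I = "\<lambda>e. sh_interleaved R (T e) Fo Fr (\<lambda>_. zero_module) (\<lambda>_ _ y. y)"
  let ?Q = "\<lambda>e. \<forall>U. scott_open U \<longrightarrow> (\<forall>s\<in>carrier (Fo U). Fr U (T e ` T e ` U) s = \<zero>\<^bsub>Fo (T e ` T e ` U)\<^esub>)"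
  have A: "?Q e" if e: "0 \<le> e" and I: "?I e" for e
  proof (intro allI impI ballI)
    fix U :: "'p set" and s assume U: "scott_open U" and s: "s \<in> carrier (Fo U)"
    obtain f g where g: "sh_mor_to_pullback R (T e) (\<lambda>_. zero_module) (\<lambda>_ _ y. y) Fo Fr g"
      and c: "\<forall>U. scott_open U \<longrightarrow> (\<forall>s\<in>carrier (Fo U). g (T e ` U) (f U s) = Fr U (T e ` T e ` U) s)"
      using I unfolding sh_interleaved_def by blast
    have U1: "scott_open (T e ` U)" using open_img[OF t1 e U] .
    have U2: "scott_open (T e ` T e ` U)" using open_img[OF t1 e U1] .
    have h: "mod_hom R zero_module (Fo (T e ` T e ` U)) (g (T e ` U))"
      using g U1 unfolding sh_mor_to_pullback_def by blast
    have ab: "abelian_group (Fo (T e ` T e ` U))" using mods[OF U2] by (rule module.axioms(2))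
    show "Fr U (T e ` T e ` U) s = \<zero>\<^bsub>Fo (T e ` T e ` U)\<^esub>"
      using c U s grp_idem_zero[OF ab hom_from_zero(1)[OF h] hom_from_zero(2)[OF h]] by simp
  qed
  have B: "?I e" if e: "0 \<le> e" and Z: "\<forall>U. scott_open U \<longrightarrow> carrier (Fo U) = {\<zero>\<^bsub>Fo U\<^esub>}" for e
  proof -
    define g where "g = (\<lambda>(U::'p set) (y::unit). \<zero>\<^bsub>Fo (T e ` U)\<^esub>)"
    have "sh_mor_to_pullback R (T e) Fo Fr (\<lambda>_. zero_module) (\<lambda>_ _ y. y) (\<lambda>U x. ())"
      unfolding sh_mor_to_pullback_def mod_hom_def by (auto simp: zero_module_def)
    moreover have "sh_mor_to_pullback R (T e) (\<lambda>_. zero_module) (\<lambda>_ _ y. y) Fo Fr g"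
      unfolding sh_mor_to_pullback_def
    proof (intro conjI allI impI ballI)
      fix U :: "'p set" assume U: "scott_open U"
      interpret M: module R "Fo (T e ` U)" using mods open_img[OF t1 e U] by blast
      show "mod_hom R zero_module (Fo (T e ` U)) (g U)"
        unfolding mod_hom_def g_def by (auto simp: zero_module_def)
    next
      fix U V :: "'p set" and x assume a: "scott_open U \<and> scott_open V \<and> V \<subseteq> U"
      then have o: "scott_open (T e ` U)" "scott_open (T e ` V)" "T e ` V \<subseteq> T e ` U"
        using open_img[OF t1 e] by auto
      show "g V x = Fr (T e ` U) (T e ` V) (g U x)"
        unfolding g_def using hom_zero[OF mods[OF o(1)] mods[OF o(2)] homs[OF o]] by simp
    qed
    moreover have "\<forall>U. scott_open U \<longrightarrow> (\<forall>s\<in>carrier (Fo U). g (T e ` U) ((\<lambda>U x. ()) U s) = Fr U (T e ` T e ` U) s)"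
    proof (intro allI impI ballI)
      fix U :: "'p set" and s assume U: "scott_open U" and s: "s \<in> carrier (Fo U)"
      have U1: "scott_open (T e ` U)" using open_img[OF t1 e U] .
      have U2: "scott_open (T e ` T e ` U)" using open_img[OF t1 e U1] .
      have sub: "T e ` T e ` U \<subseteq> U" using img_sub[OF tr e U] img_sub[OF tr e U1] by blast
      have "Fr U (T e ` T e ` U) s \<in> carrier (Fo (T e ` T e ` U))"
        using homs[OF U U2 sub] s unfolding mod_hom_def by blast
      then show "g (T e ` U) ((\<lambda>U x. ()) U s) = Fr U (T e ` T e ` U) s"
        using Z U2 unfolding g_def by auto
    qed
    moreover have "\<forall>U. scott_open U \<longrightarrow> (\<forall>s\<in>carrier zero_module. (\<lambda>U x. ()) (T e ` U) (g U s) = s)" by simp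
    ultimately show ?thesis
      unfolding sh_interleaved_def by (intro exI[of _ "\<lambda>U x. ()"] exI[of _ g]) auto
  qed
  have C: "\<forall>U. scott_open U \<longrightarrow> carrier (Fo U) = {\<zero>\<^bsub>Fo U\<^esub>}"
    if h: "\<forall>d>0. \<exists>e. 0 \<le> e \<and> e < d \<and> ?Q e"
  proof (intro allI impI)
    fix U :: "'p set" assume U: "scott_open U"
    interpret M: module R "Fo U" using mods[OF U] .
    define E where "E = {e. 0 \<le> e \<and> ?Q e}"
    define C where "C = (\<lambda>e. T e ` T e ` U) ` E"
    have Epos: "\<And>e. e \<in> E \<Longrightarrow> 0 \<le> e" unfolding E_def by blast
    have Copen: "\<forall>V\<in>C. scott_open V"
    proof
      fix V assume V: "V \<in> C"
      obtain e where e: "e \<in> E" "V = T e ` T e ` U" using V unfolding C_def by blast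
      show "scott_open V" using open_img[OF t1 Epos[OF e(1)] open_img[OF t1 Epos[OF e(1)] U]] e(2) by simp
    qed
    have Csub: "V \<subseteq> U" if V: "V \<in> C" for V
    proof -
      obtain e where e: "e \<in> E" "V = T e ` T e ` U" using V unfolding C_def by blast
      have "T e ` U \<subseteq> U" using img_sub[OF tr Epos[OF e(1)] U] .
      moreover have "T e ` T e ` U \<subseteq> T e ` U"
        using img_sub[OF tr Epos[OF e(1)] open_img[OF t1 Epos[OF e(1)] U]] .
      ultimately show ?thesis using e(2) by blast
    qed
    have "\<Union>C = U"
    proof
      show "\<Union>C \<subseteq> U" using Csub by blast
    next
      show "U \<subseteq> \<Union>C"
      proof
        fix x assume x: "x \<in> U"
        have "directed {y. y \<lless> x}" "is_sup {y. y \<lless> x} x" using cp unfolding continuous_poset_def by auto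
        then obtain y where y: "y \<lless> x" "y \<in> U" using U x unfolding scott_open_def by blast
        obtain ep where ep: "ep > 0" "T ep y \<le> x" using t3 y unfolding TR3_def by blast
        obtain e where e: "0 \<le> e" "e < ep / 2" "?Q e" using h ep by (metis half_gt_zero)
        have "T e (T e y) \<le> x" using T_twice[OF tr sl e(1), of ep y] ep e by auto
        moreover have "T e (T e y) \<in> T e ` T e ` U" using y by blast
        moreover have "scott_open (T e ` T e ` U)" using open_img[OF t1 e(1) open_img[OF t1 e(1) U]] .
        ultimately have "x \<in> T e ` T e ` U" unfolding scott_open_def by blast
        moreover have "T e ` T e ` U \<in> C" unfolding C_def E_def using e by blast
        ultimately show "x \<in> \<Union>C" by blast
      qed
    qed
    have "s = \<zero>\<^bsub>Fo U\<^esub>" if s: "s \<in> carrier (Fo U)" for s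
    proof (rule loc[OF U Copen \<open>\<Union>C = U\<close> s M.zero_closed], intro ballI)
      fix V assume V: "V \<in> C"
      then obtain e where e: "e \<in> E" "V = T e ` T e ` U" unfolding C_def by blast
      have Vo: "scott_open V" using Copen V by blast
      have Qe: "?Q e" using e(1) unfolding E_def by blast
      have "Fr U (T e ` T e ` U) s = \<zero>\<^bsub>Fo (T e ` T e ` U)\<^esub>" using Qe U s by blast
      then have "Fr U V s = \<zero>\<^bsub>Fo V\<^esub>" using e(2) by simp
      also have "\<dots> = Fr U V \<zero>\<^bsub>Fo U\<^esub>"
        using hom_zero[OF mods[OF U] mods[OF Vo] homs[OF U Vo Csub[OF V]]] by simp
      finally show "Fr U V s = Fr U V \<zero>\<^bsub>Fo U\<^esub>" .
    qed
    then show "carrier (Fo U) = {\<zero>\<^bsub>Fo U\<^esub>}" by auto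
  qed
  have eq: "sh_dist R T Fo Fr (\<lambda>_. zero_module) (\<lambda>_ _ y. y) = Inf {ereal e | e. 0 \<le> e \<and> ?I e}"
    unfolding sh_dist_def ..
  show ?thesis
  proof
    assume "sh_dist R T Fo Fr (\<lambda>_. zero_module) (\<lambda>_ _ y. y) = 0"
    then have "\<forall>d>0. \<exists>e. 0 \<le> e \<and> e < d \<and> ?I e" unfolding eq by (simp only: inf_zero_iff)
    then have "\<forall>d>0. \<exists>e. 0 \<le> e \<and> e < d \<and> ?Q e" using A by meson
    then show "\<forall>U. scott_open U \<longrightarrow> carrier (Fo U) = {\<zero>\<^bsub>Fo U\<^esub>}" by (rule C)
  next
    assume Z: "\<forall>U. scott_open U \<longrightarrow> carrier (Fo U) = {\<zero>\<^bsub>Fo U\<^esub>}"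
    have "\<forall>d>0. \<exists>e. 0 \<le> e \<and> e < d \<and> ?I e"
    proof (intro allI impI)
      fix d :: real assume "d > 0"
      then show "\<exists>e. 0 \<le> e \<and> e < d \<and> ?I e" using B[OF _ Z] by (intro exI[of _ "d/2"]) auto
    qed
    then show "sh_dist R T Fo Fr (\<lambda>_. zero_module) (\<lambda>_ _ y. y) = 0" unfolding eq by (simp only: inf_zero_iff)
  qed
qed

theorem mainTheorem20:
  fixes R :: "('r, 'x) ring_scheme"
    and T :: "real \<Rightarrow> 'p::order \<Rightarrow> 'p"
  assumes "cring R"
    and "continuous_poset TYPE('p)"
    and "\<forall>e\<ge>0. translation (T e) \<and> scott_continuous (T e)"
    and "superlinear T" and "TR1 T" and "TR2 T" and "TR3 T"
  shows
    "(\<forall>(Mo :: 'p \<Rightarrow> ('r, 'm) module) Mm. pers_module R Mo Mm \<longrightarrow>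
        (pm_dist R T Mo Mm (\<lambda>_. zero_module) (\<lambda>_ _ y. y) = 0 \<longleftrightarrow> ephemeral Mo Mm)) \<and>
     (\<forall>(Fo :: 'p set \<Rightarrow> ('r, 'n) module) Fr. scott_sheaf R Fo Fr \<longrightarrow>
        (sh_dist R T Fo Fr (\<lambda>_. zero_module) (\<lambda>_ _ y. y) = 0 \<longleftrightarrow>
         (\<forall>U. scott_open U \<longrightarrow> carrier (Fo U) = {\<zero>\<^bsub>Fo U\<^esub>})))"
proof (intro conjI allI impI)
  fix Mo :: "'p \<Rightarrow> ('r, 'm) module" and Mm assume "pers_module R Mo Mm"
  then show "pm_dist R T Mo Mm (\<lambda>_. zero_module) (\<lambda>_ _ y. y) = 0 \<longleftrightarrow> ephemeral Mo Mm"
    by (rule part1[OF _ assms(3,4,6,7)])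
next
  fix Fo :: "'p set \<Rightarrow> ('r, 'n) module" and Fr assume "scott_sheaf R Fo Fr"
  then show "sh_dist R T Fo Fr (\<lambda>_. zero_module) (\<lambda>_ _ y. y) = 0 \<longleftrightarrow>
         (\<forall>U. scott_open U \<longrightarrow> carrier (Fo U) = {\<zero>\<^bsub>Fo U\<^esub>})"
    by (rule part2[OF _ assms(3,4,5,7,2)])
qed

end
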